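(* Let $I=[a,b]\subset\mathbb R$ with $a<b$, and let $f:I\to I$ be a continuous increasing function such that $f(a)=a$, $f(b)=b$ and $f(x)\neq x$ for all $x\in\,]a,b[$. Then ${\rm h_{pol}}(f)=1$.
   Context: $I$ carries the usual metric $d(x,y)=|x-y|$. Polynomial entropy: with $d_n^f(x,y)=\max_{0\le k\le n-1}d(f^k(x),f^k(y))$ and $G_n^f(\varepsilon)$ the minimal number of $d_n^f$-balls of radius $\varepsilon$ covering $I$, ${\rm h_{pol}}(f)=\lim_{\varepsilon\to0}\limsup_{n\to\infty}\frac{\log G_n^f(\varepsilon)}{\log n}$. *)

theory Defs
  imports "HOL-Analysis.Analysis" "HOL-Library.Extended_Real"
begin

definition dyn_dist :: "(real \<Rightarrow> real) \<Rightarrow> nat \<Rightarrow> real \<Rightarrow> real \<Rightarrow> real" where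
  "dyn_dist f n x y = (if n = 0 then 0 else Max ((\<lambda>k. \<bar>(f ^^ k) x - (f ^^ k) y\<bar>) ` {..<n}))"

definition dyn_ball :: "real set \<Rightarrow> (real \<Rightarrow> real) \<Rightarrow> nat \<Rightarrow> real \<Rightarrow> real \<Rightarrow> real set" where
  "dyn_ball I f n c e = {y \<in> I. dyn_dist f n c y < e}"

definition cover_num :: "real set \<Rightarrow> (real \<Rightarrow> real) \<Rightarrow> nat \<Rightarrow> real \<Rightarrow> nat" where
  "cover_num I f n e = Inf {card C | C. finite C \<and> C \<subseteq> I \<and> I \<subseteq> (\<Union>c\<in>C. dyn_ball I f n c e)}"

definition pol_growth :: "real set \<Rightarrow> (real \<Rightarrow> real) \<Rightarrow> real \<Rightarrow> ereal" where
  "pol_growth I f e = limsup (\<lambda>n. ereal (ln (real (cover_num I f n e)) / ln (real n)))"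

text \<open>Polynomial entropy: the limit as e -> 0+ of pol_growth (it exists by monotonicity).\<close>
definition hpol :: "real set \<Rightarrow> (real \<Rightarrow> real) \<Rightarrow> ereal" where
  "hpol I f = Lim (at_right 0) (pol_growth I f)"

end

theory Submission
  imports Defs "HOL-Real_Asymp.Real_Asymp"
begin

lemma dyn_dist_less_iff:
  assumes "n > 0"
  shows "dyn_dist f n x y < e \<longleftrightarrow> (\<forall>k<n. \<bar>(f ^^ k) x - (f ^^ k) y\<bar> < e)"
proof -
  have "dyn_dist f n x y = Max ((\<lambda>k. \<bar>(f ^^ k) x - (f ^^ k) y\<bar>) ` {..<n})"
    using assms by (simp add: dyn_dist_def)
  also have "\<dots> < e \<longleftrightarrow> (\<forall>k<n. \<bar>(f ^^ k) x - (f ^^ k) y\<bar> < e)"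
    using assms by (subst Max_less_iff) auto
  finally show ?thesis .
qed

lemma funpow_fix: "f x = x \<Longrightarrow> (f ^^ k) x = x"
  by (induction k) auto

locale up_map =
  fixes a b :: real and f :: "real \<Rightarrow> real"
  assumes ab: "a < b" and img: "f ` {a..b} \<subseteq> {a..b}" and cont: "continuous_on {a..b} f"
    and mono: "mono_on {a..b} f" and fa: "f a = a" and fb: "f b = b"
    and up: "\<And>x. x \<in> {a<..<b} \<Longrightarrow> x < f x"
begin

lemma f_in: "x \<in> {a..b} \<Longrightarrow> f x \<in> {a..b}" using img by blast

lemma iter_in: "x \<in> {a..b} \<Longrightarrow> (f ^^ k) x \<in> {a..b}"
  by (induction k) (auto intro: f_in simp del: atLeastAtMost_iff)

lemma ge: "x \<in> {a..b} \<Longrightarrow> x \<le> f x"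
proof -
  assume x: "x \<in> {a..b}"
  show ?thesis
  proof (cases "x = a \<or> x = b")
    case True then show ?thesis using fa fb by auto
  next
    case False then have "x \<in> {a<..<b}" using x by auto
    then show ?thesis using up by fastforce
  qed
qed

lemma iter_mono: "x \<in> {a..b} \<Longrightarrow> y \<in> {a..b} \<Longrightarrow> x \<le> y \<Longrightarrow> (f ^^ k) x \<le> (f ^^ k) y"
proof (induction k)
  case 0 then show ?case by simp
next
  case (Suc k)
  then show ?case using mono_onD[OF mono] iter_in[of x k] iter_in[of y k] by simp
qed

lemma orbit_mono: assumes "x \<in> {a..b}" "i \<le> j" shows "(f ^^ i) x \<le> (f ^^ j) x"
  using assms(2)
proof (induction j rule: dec_induct)
  case base then show ?case by simp
next
  case (step j)
  have "(f ^^ j) x \<le> f ((f ^^ j) x)" using ge iter_in assms(1) by blast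
  then show ?case using step by simp
qed

lemma iter_cont: "continuous_on {a..b} (f ^^ k)"
proof (induction k)
  case 0 then show ?case by (simp add: continuous_on_id)
next
  case (Suc k)
  have "continuous_on {a..b} (\<lambda>x. f ((f ^^ k) x))"
    by (rule continuous_on_compose2[OF cont Suc]) (use iter_in in auto)
  then show ?case by (simp add: comp_def)
qed

lemma min_gap:
  assumes "a < p" "p \<le> q" "q < b"
  shows "\<exists>m>0. \<forall>w\<in>{p..q}. m \<le> f w - w"
proof -
  have "continuous_on {p..q} (\<lambda>w. f w - w)"
    by (intro continuous_intros continuous_on_subset[OF cont]) (use assms in auto)
  then obtain w0 where w0: "w0 \<in> {p..q}" "\<forall>y\<in>{p..q}. f w0 - w0 \<le> f y - y"
    using continuous_attains_inf[of "{p..q}" "\<lambda>w. f w - w"] assms by auto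
  have "w0 < f w0" using up[of w0] w0(1) assms by auto
  then show ?thesis using w0 by (intro exI[of _ "f w0 - w0"]) auto
qed

lemma escape:
  assumes "a < p" "p \<le> q" "q < b" "m > 0" "\<forall>w\<in>{p..q}. m \<le> f w - w"
    "q - p < real T * m" "z \<in> {p..b}" "T \<le> j"
  shows "q < (f ^^ j) z"
proof -
  have z: "z \<in> {a..b}" using assms by auto
  have key: "q < (f ^^ j) z \<or> p + real j * m \<le> (f ^^ j) z" for j
  proof (induction j)
    case 0 then show ?case using assms by simp
  next
    case (Suc j)
    let ?w = "(f ^^ j) z"
    have wi: "?w \<in> {a..b}" using iter_in z by blast
    show ?case
    proof (cases "q < ?w")
      case True
      then show ?thesis using ge[OF wi] by simp
    next
      case False
      then have "p + real j * m \<le> ?w" using Suc by auto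
      moreover have "real j * m \<ge> 0" using assms by simp
      ultimately have "?w \<in> {p..q}" using False by auto
      then have "m \<le> f ?w - ?w" using assms by auto
      then show ?thesis using \<open>p + real j * m \<le> ?w\<close> by (simp add: algebra_simps)
    qed
  qed
  show ?thesis
  proof (rule ccontr)
    assume "\<not> q < (f ^^ j) z"
    then have "p + real j * m \<le> q" using key[of j] by auto
    moreover have "real T * m \<le> real j * m" using assms by (simp add: mult_right_mono)
    ultimately show False using assms by linarith
  qed
qed

lemma unif:
  assumes "e > 0"
  shows "\<exists>d>0. \<forall>j\<le>T. \<forall>x\<in>{a..b}. \<forall>y\<in>{a..b}. \<bar>x - y\<bar> < d \<longrightarrow> \<bar>(f ^^ j) x - (f ^^ j) y\<bar> < e"
proof (induction T)
  case 0 then show ?case using assms by (intro exI[of _ e]) auto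
next
  case (Suc T)
  then obtain d where d: "d > 0" "\<forall>j\<le>T. \<forall>x\<in>{a..b}. \<forall>y\<in>{a..b}. \<bar>x - y\<bar> < d \<longrightarrow> \<bar>(f ^^ j) x - (f ^^ j) y\<bar> < e"
    by blast
  have "uniformly_continuous_on {a..b} (f ^^ Suc T)"
    by (rule compact_uniformly_continuous[OF iter_cont]) simp
  then obtain d' where d': "d' > 0" "\<forall>x\<in>{a..b}. \<forall>x'\<in>{a..b}. dist x' x < d' \<longrightarrow> dist ((f ^^ Suc T) x') ((f ^^ Suc T) x) < e"
    unfolding uniformly_continuous_on_def using assms by metis
  show ?case
  proof (intro exI[of _ "min d d'"] conjI allI impI ballI)
    show "0 < min d d'" using d d' by simp
  next
    fix j x y assume j: "j \<le> Suc T" and x: "x \<in> {a..b}" and y: "y \<in> {a..b}" and xy: "\<bar>x - y\<bar> < min d d'"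
    show "\<bar>(f ^^ j) x - (f ^^ j) y\<bar> < e"
    proof (cases "j = Suc T")
      case True
      then show ?thesis using d'(2) x y xy by (auto simp: dist_real_def)
    next
      case False
      then show ?thesis using d(2) j x y xy by auto
    qed
  qed
qed


lemma cover_upper:
  assumes e: "e > 0"
  shows "\<exists>N::nat. \<forall>n. \<exists>C. finite C \<and> C \<subseteq> {a..b} \<and> {a..b} \<subseteq> (\<Union>c\<in>C. dyn_ball {a..b} f n c e) \<and> card C \<le> N * n + 1"
proof -
  define r where "r = min e (b-a) / 3"
  have r: "0 < r" "r < e" "3*r \<le> b - a" using e ab by (auto simp: r_def min_def)
  define p where "p = a + r"
  define q where "q = b - r"
  have pq: "a < p" "p \<le> q" "q < b" "p - a < e" "b - q < e" using r by (auto simp: p_def q_def)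
  obtain m where m: "m > 0" "\<forall>w\<in>{p..q}. m \<le> f w - w" using min_gap[OF pq(1-3)] by blast
  obtain T :: nat where T: "q - p < real T * m" using ex_less_of_nat_mult[OF m(1)] by blast
  obtain d where d: "d > 0" "\<forall>j\<le>T. \<forall>x\<in>{a..b}. \<forall>y\<in>{a..b}. \<bar>x - y\<bar> < d \<longrightarrow> \<bar>(f ^^ j) x - (f ^^ j) y\<bar> < e"
    using unif[OF e, of T] by blast
  define \<eta> where "\<eta> = d / 2"
  have \<eta>: "\<eta> > 0" "\<eta> < d" using d by (auto simp: \<eta>_def)
  define N where "N = nat \<lceil>(b - p) / \<eta>\<rceil> + 1"
  define cell where "cell z = nat \<lfloor>(z - p) / \<eta>\<rfloor>" for z
  define K where "K t i = {x\<in>{a..b}. (t = 0 \<or> (f ^^ (t-1)) x < p) \<and> p \<le> (f ^^ t) x \<and> cell ((f ^^ t) x) = i}" for t i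
  have cls: "\<bar>(f ^^ k) x - (f ^^ k) y\<bar> < e" if x: "x \<in> K t i" and y: "y \<in> K t i" for x y t i k
  proof -
    define zx where "zx = (f ^^ t) x"
    define zy where "zy = (f ^^ t) y"
    have xI: "x \<in> {a..b}" and yI: "y \<in> {a..b}" using x y by (auto simp: K_def)
    have zxI: "zx \<in> {a..b}" and zyI: "zy \<in> {a..b}" using iter_in xI yI by (auto simp: zx_def zy_def)
    have zxp: "p \<le> zx" and zyp: "p \<le> zy" using x y by (auto simp: K_def zx_def zy_def)
    have ceq: "cell zx = cell zy" using x y by (auto simp: K_def zx_def zy_def)
    have u0: "0 \<le> (zx - p) / \<eta>" "0 \<le> (zy - p) / \<eta>" using zxp zyp \<eta> by auto
    have "\<lfloor>(zx - p) / \<eta>\<rfloor> = \<lfloor>(zy - p) / \<eta>\<rfloor>"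
      using ceq u0 unfolding cell_def by (simp add: eq_nat_nat_iff)
    then have "\<bar>(zx - p) / \<eta> - (zy - p) / \<eta>\<bar> < 1"
      using of_int_floor_le[of "(zx - p) / \<eta>"] of_int_floor_le[of "(zy - p) / \<eta>"]
        real_of_int_floor_add_one_gt[of "(zx - p) / \<eta>"] real_of_int_floor_add_one_gt[of "(zy - p) / \<eta>"]
      by linarith
    moreover have "(zx - p) / \<eta> - (zy - p) / \<eta> = (zx - zy) / \<eta>" by (simp add: diff_divide_distrib)
    ultimately have "\<bar>zx - zy\<bar> / \<bar>\<eta>\<bar> < 1" by (simp add: abs_divide)
    then have "\<bar>zx - zy\<bar> / \<eta> < 1" using \<eta> by simp
    then have zz: "\<bar>zx - zy\<bar> < d" using \<eta> by (simp add: divide_less_eq)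
    show ?thesis
    proof (cases "k < t")
      case True
      then have t0: "t \<noteq> 0" by auto
      then have "(f ^^ (t-1)) x < p" "(f ^^ (t-1)) y < p" using x y by (auto simp: K_def)
      moreover have "(f ^^ k) x \<le> (f ^^ (t-1)) x" "(f ^^ k) y \<le> (f ^^ (t-1)) y"
        using orbit_mono[OF xI, of k "t-1"] orbit_mono[OF yI, of k "t-1"] True by simp_all
      moreover have "a \<le> (f ^^ k) x" "a \<le> (f ^^ k) y" using iter_in[OF xI, of k] iter_in[OF yI, of k] by simp_all
      ultimately show ?thesis using pq by linarith
    next
      case False
      then have kk: "k = (k - t) + t" by simp
      have fx: "(f ^^ k) x = (f ^^ (k - t)) zx" and fy: "(f ^^ k) y = (f ^^ (k - t)) zy"
        unfolding zx_def zy_def by (subst kk, simp add: funpow_add)+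
      show ?thesis
      proof (cases "k - t \<le> T")
        case True
        then show ?thesis using d(2) zxI zyI zz fx fy by auto
      next
        case False
        have "q < (f ^^ (k - t)) zx" "q < (f ^^ (k - t)) zy"
          using escape[OF pq(1-3) m T, of zx "k - t"] escape[OF pq(1-3) m T, of zy "k - t"]
            False zxp zyp zxI zyI by auto
        moreover have "(f ^^ (k - t)) zx \<le> b" "(f ^^ (k - t)) zy \<le> b"
          using iter_in[OF zxI, of "k-t"] iter_in[OF zyI, of "k-t"] by simp_all
        ultimately show ?thesis using fx fy pq by linarith
      qed
    qed
  qed
  have "\<exists>C. finite C \<and> C \<subseteq> {a..b} \<and> {a..b} \<subseteq> (\<Union>c\<in>C. dyn_ball {a..b} f n c e) \<and> card C \<le> N * n + 1" for n
  proof (cases "n = 0")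
    case True
    show ?thesis
      by (rule exI[of _ "{a}"]) (use True ab e in \<open>auto simp: dyn_ball_def dyn_dist_def\<close>)
  next
    case False
    then have n0: "n > 0" by simp
    define rep where "rep t i = (SOME x. x \<in> K t i)" for t i
    have rep: "K t i \<noteq> {} \<Longrightarrow> rep t i \<in> K t i" for t i unfolding rep_def by (simp add: some_in_eq)
    define Idx where "Idx = {(t,i). t < n \<and> i < N \<and> K t i \<noteq> {}}"
    have Idx_sub: "Idx \<subseteq> {..<n} \<times> {..<N}" by (auto simp: Idx_def)
    have finIdx: "finite Idx" using finite_subset[OF Idx_sub] by simp
    define C where "C = insert a ((\<lambda>(t,i). rep t i) ` Idx)"
    have finC: "finite C" using finIdx by (simp add: C_def)
    have "card C \<le> card ((\<lambda>(t,i). rep t i) ` Idx) + 1"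
      using finIdx by (simp add: C_def card_insert_if)
    also have "card ((\<lambda>(t,i). rep t i) ` Idx) \<le> card Idx" by (rule card_image_le[OF finIdx])
    also have "card Idx \<le> card ({..<n} \<times> {..<N})" by (rule card_mono[OF _ Idx_sub]) simp
    also have "card ({..<n} \<times> {..<N}) = N * n" by (simp add: card_cartesian_product)
    finally have cardC: "card C \<le> N * n + 1" by simp
    have CI: "C \<subseteq> {a..b}"
    proof
      fix c assume "c \<in> C"
      then show "c \<in> {a..b}"
      proof (cases "c = a")
        case False
        then obtain t i where "(t,i) \<in> Idx" "c = rep t i" using \<open>c \<in> C\<close> by (auto simp: C_def)
        then have "c \<in> K t i" using rep by (auto simp: Idx_def)
        then show ?thesis by (auto simp: K_def)
      qed (use ab in auto)
    qed
    have cov: "x \<in> (\<Union>c\<in>C. dyn_ball {a..b} f n c e)" if xI: "x \<in> {a..b}" for x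
    proof (cases "(f ^^ (n-1)) x < p")
      case True
      have "\<bar>(f ^^ k) a - (f ^^ k) x\<bar> < e" if "k < n" for k
      proof -
        have "(f ^^ k) a = a" by (rule funpow_fix[of f a, OF fa])
        moreover have "(f ^^ k) x \<le> (f ^^ (n-1)) x" using orbit_mono[OF xI, of k "n-1"] that by simp
        moreover have "a \<le> (f ^^ k) x" using iter_in[OF xI, of k] by simp
        ultimately show ?thesis using True pq by linarith
      qed
      then have "x \<in> dyn_ball {a..b} f n a e" using xI n0 by (simp add: dyn_ball_def dyn_dist_less_iff)
      then show ?thesis by (auto simp: C_def)
    next
      case False
      define t where "t = (LEAST t. p \<le> (f ^^ t) x)"
      have pt: "p \<le> (f ^^ t) x" unfolding t_def by (rule LeastI[of _ "n-1"]) (use False in auto)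
      have tn: "t \<le> n - 1" unfolding t_def by (rule Least_le) (use False in auto)
      have tprev: "t = 0 \<or> (f ^^ (t-1)) x < p"
      proof (cases "t = 0")
        case False
        then have "t - 1 < t" by simp
        then have "\<not> p \<le> (f ^^ (t-1)) x" unfolding t_def by (rule not_less_Least)
        then show ?thesis by simp
      qed simp
      define i where "i = cell ((f ^^ t) x)"
      have ftI: "(f ^^ t) x \<in> {a..b}" using iter_in[OF xI] by blast
      have "\<lfloor>((f ^^ t) x - p) / \<eta>\<rfloor> \<le> \<lfloor>(b - p) / \<eta>\<rfloor>"
        using ftI \<eta> by (intro floor_mono divide_right_mono) auto
      also have "\<dots> \<le> \<lceil>(b - p) / \<eta>\<rceil>" by simp
      finally have "i < N" unfolding i_def cell_def N_def by linarith
      have xK: "x \<in> K t i" using xI tprev pt by (simp add: K_def i_def)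
      then have "(t,i) \<in> Idx" using tn n0 \<open>i < N\<close> by (auto simp: Idx_def)
      then have rC: "rep t i \<in> C" by (auto simp: C_def)
      have rK: "rep t i \<in> K t i" using rep xK by blast
      have "x \<in> dyn_ball {a..b} f n (rep t i) e"
        using xI n0 cls[OF rK xK] by (simp add: dyn_ball_def dyn_dist_less_iff)
      then show ?thesis using rC by blast
    qed
    show ?thesis using finC CI cov cardC by blast
  qed
  then show ?thesis by blast
qed


lemma cover_num_upper:
  assumes e: "e > 0"
  shows "\<exists>N::nat. \<forall>n. cover_num {a..b} f n e \<le> N * n + 1"
proof -
  obtain N where N: "\<forall>n. \<exists>C. finite C \<and> C \<subseteq> {a..b} \<and> {a..b} \<subseteq> (\<Union>c\<in>C. dyn_ball {a..b} f n c e) \<and> card C \<le> N * n + 1"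
    using cover_upper[OF e] by (elim exE) (rule that)
  have "cover_num {a..b} f n e \<le> N * n + 1" for n
  proof -
    obtain C where C: "finite C" "C \<subseteq> {a..b}" "{a..b} \<subseteq> (\<Union>c\<in>C. dyn_ball {a..b} f n c e)" "card C \<le> N * n + 1"
      using spec[OF N, of n] by (elim exE conjE) (rule that)
    have "card C \<in> {card C | C. finite C \<and> C \<subseteq> {a..b} \<and> {a..b} \<subseteq> (\<Union>c\<in>C. dyn_ball {a..b} f n c e)}"
      using C(1-3) by (intro CollectI exI[of _ C]) simp
    then have "cover_num {a..b} f n e \<le> card C"
      unfolding cover_num_def by (rule cInf_lower) simp
    then show ?thesis using C(4) by linarith
  qed
  then show ?thesis by blast
qed

lemma cover_nonempty:
  assumes e: "e > 0"
  shows "{card C | C. finite C \<and> C \<subseteq> {a..b} \<and> {a..b} \<subseteq> (\<Union>c\<in>C. dyn_ball {a..b} f n c e)} \<noteq> {}"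
proof -
  obtain N where N: "\<forall>n. \<exists>C. finite C \<and> C \<subseteq> {a..b} \<and> {a..b} \<subseteq> (\<Union>c\<in>C. dyn_ball {a..b} f n c e) \<and> card C \<le> N * n + 1"
    using cover_upper[OF e] by (elim exE) (rule that)
  obtain C where C: "finite C" "C \<subseteq> {a..b}" "{a..b} \<subseteq> (\<Union>c\<in>C. dyn_ball {a..b} f n c e)"
    using spec[OF N, of n] by (elim exE conjE) (rule that)
  have "card C \<in> {card C | C. finite C \<and> C \<subseteq> {a..b} \<and> {a..b} \<subseteq> (\<Union>c\<in>C. dyn_ball {a..b} f n c e)}"
    using C(1-3) by (intro CollectI exI[of _ C]) simp
  then show ?thesis by blast
qed

lemma cover_lower:
  "\<exists>\<epsilon>0>0. \<exists>s::nat>0. \<forall>e n. 0 < e \<longrightarrow> e \<le> \<epsilon>0 \<longrightarrow> n > 0 \<longrightarrow> real n / real s \<le> real (cover_num {a..b} f n e)"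
proof -
  define c1 where "c1 = a + (b-a)/3"
  define c2 where "c2 = a + 2*(b-a)/3"
  define \<epsilon>0 where "\<epsilon>0 = (b-a)/6"
  have cc: "a < c1" "c1 \<le> c2" "c2 < b" "c2 - c1 = 2*\<epsilon>0" "\<epsilon>0 > 0" using ab by (auto simp: c1_def c2_def \<epsilon>0_def field_simps)
  obtain m where m: "m > 0" "\<forall>w\<in>{c1..c2}. m \<le> f w - w" using min_gap[OF cc(1-3)] by blast
  obtain T :: nat where T: "c2 - c1 < real T * m" using ex_less_of_nat_mult[OF m(1)] by blast
  define s where "s = Suc T"
  have s0: "s > 0" by (simp add: s_def)
  have sT: "c2 - c1 < real s * m" using T m by (simp add: s_def algebra_simps)
  have ex: "\<exists>x. x \<in> {a..b} \<and> (f ^^ k) x = c2" for k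
  proof -
    have "(f ^^ k) a = a" by (rule funpow_fix[of f a, OF fa])
    moreover have "(f ^^ k) b = b" by (rule funpow_fix[of f b, OF fb])
    ultimately have "\<exists>x\<ge>a. x \<le> b \<and> (f ^^ k) x = c2"
      using cc ab by (intro IVT'[OF _ _ _ iter_cont]) auto
    then show ?thesis by auto
  qed
  define xk where "xk k = (SOME x. x \<in> {a..b} \<and> (f ^^ k) x = c2)" for k
  have xk: "xk k \<in> {a..b}" "(f ^^ k) (xk k) = c2" for k
    using someI_ex[OF ex[of k]] unfolding xk_def by auto
  have sep: "(f ^^ i) (xk j) < c1" if ij: "i + s \<le> j" for i j
  proof (rule ccontr)
    assume "\<not> (f ^^ i) (xk j) < c1"
    then have w: "(f ^^ i) (xk j) \<in> {c1..b}" using iter_in[OF xk(1)] by auto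
    have "c2 < (f ^^ s) ((f ^^ i) (xk j))"
      using escape[OF cc(1-3) m sT w] by simp
    also have "(f ^^ s) ((f ^^ i) (xk j)) = (f ^^ (s + i)) (xk j)" by (simp add: funpow_add)
    also have "\<dots> \<le> (f ^^ j) (xk j)" by (rule orbit_mono[OF xk(1)]) (use ij in simp)
    finally show False using xk(2)[of j] by simp
  qed
  have "real n / real s \<le> real (cover_num {a..b} f n e)" if e: "0 < e" "e \<le> \<epsilon>0" and n0: "n > 0" for e n
  proof -
    let ?S = "{card C | C. finite C \<and> C \<subseteq> {a..b} \<and> {a..b} \<subseteq> (\<Union>c\<in>C. dyn_ball {a..b} f n c e)}"
    have "?S \<noteq> {}" by (rule cover_nonempty[OF e(1)])
    then have "Inf ?S \<in> ?S" by (rule Inf_nat_def1)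
    then obtain C where C: "finite C" "C \<subseteq> {a..b}" "{a..b} \<subseteq> (\<Union>c\<in>C. dyn_ball {a..b} f n c e)"
      and cn0: "Inf ?S = card C"
      by (elim CollectE exE conjE) (rule that; assumption)
    have cn: "cover_num {a..b} f n e = card C" using cn0 by (simp add: cover_num_def)
    define R where "R = (n - 1) div s"
    have ex_c: "\<exists>c. c \<in> C \<and> xk (s*r) \<in> dyn_ball {a..b} f n c e" for r
    proof -
      have "xk (s*r) \<in> (\<Union>c\<in>C. dyn_ball {a..b} f n c e)" using C(3) xk(1)[of "s*r"] by (rule subsetD)
      then show ?thesis by (elim UN_E) (intro exI conjI)
    qed
    define \<phi> where "\<phi> r = (SOME c. c \<in> C \<and> xk (s*r) \<in> dyn_ball {a..b} f n c e)" for r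
    have \<phi>0: "\<phi> r \<in> C \<and> xk (s*r) \<in> dyn_ball {a..b} f n (\<phi> r) e" for r
      unfolding \<phi>_def by (rule someI_ex[OF ex_c[of r]])
    have \<phi>: "\<phi> r \<in> C" "xk (s*r) \<in> dyn_ball {a..b} f n (\<phi> r) e" for r
      using \<phi>0[of r] by simp_all
    have sR: "s * R \<le> n - 1" unfolding R_def by (rule times_div_less_eq_dividend)
    have noncol: "\<phi> r1 \<noteq> \<phi> r2" if r12: "r1 < r2" "r2 \<le> R" for r1 r2
    proof
      assume eq: "\<phi> r1 = \<phi> r2"
      define c where "c = \<phi> r1"
      define i where "i = s * r1"
      have "s * r1 \<le> s * R" using r12 by simp
      then have i_n: "i < n" using sR n0 unfolding i_def by linarith
      have "s * r1 + s \<le> s * r2" using r12 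
        by (metis Suc_leI mult_Suc_right mult_le_mono2 add.commute)
      then have sep': "(f ^^ i) (xk (s * r2)) < c1" using sep unfolding i_def by blast
      have d1: "dyn_dist f n c (xk i) < e" using \<phi>(2)[of r1] by (simp add: dyn_ball_def c_def i_def)
      have d2: "dyn_dist f n c (xk (s*r2)) < e" using \<phi>(2)[of r2] eq by (simp add: dyn_ball_def c_def)
      have "\<bar>(f ^^ i) c - (f ^^ i) (xk i)\<bar> < e" using d1 i_n n0 by (simp add: dyn_dist_less_iff)
      moreover have "\<bar>(f ^^ i) c - (f ^^ i) (xk (s*r2))\<bar> < e" using d2 i_n n0 by (simp add: dyn_dist_less_iff)
      moreover have "(f ^^ i) (xk i) = c2" by (rule xk(2))
      ultimately show False using sep' cc e by linarith
    qed
    have inj: "inj_on \<phi> {..R}"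
    proof (rule inj_onI)
      fix r1 r2 assume "r1 \<in> {..R}" "r2 \<in> {..R}" "\<phi> r1 = \<phi> r2"
      then show "r1 = r2" using noncol[of r1 r2] noncol[of r2 r1]
        by (metis atMost_iff linorder_neqE_nat)
    qed
    have "card {..R} \<le> card C" by (rule card_inj_on_le[OF inj _ C(1)]) (use \<phi> in auto)
    then have RC: "R + 1 \<le> cover_num {a..b} f n e" using cn by simp
    have "n - 1 = s * R + (n - 1) mod s" unfolding R_def by simp
    moreover have "(n - 1) mod s < s" using s0 by simp
    moreover have "s * (R + 1) = s * R + s" by simp
    ultimately have "n \<le> s * (R + 1)" using n0 by linarith
    then have "real n \<le> real s * real (R + 1)" by (metis of_nat_le_iff of_nat_mult)
    also have "\<dots> \<le> real s * real (cover_num {a..b} f n e)" using RC by (intro mult_left_mono) auto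
    finally show ?thesis using s0 by (simp add: divide_le_eq mult.commute)
  qed
  then show ?thesis using cc s0 by blast
qed

lemma up_result: "\<exists>\<epsilon>0>0. \<forall>e. 0 < e \<and> e \<le> \<epsilon>0 \<longrightarrow> pol_growth {a..b} f e = ereal 1"
proof -
  obtain \<epsilon>0 s where \<epsilon>0: "\<epsilon>0 > 0" and s: "s > (0::nat)"
    and low: "\<forall>e n. 0 < e \<longrightarrow> e \<le> \<epsilon>0 \<longrightarrow> n > 0 \<longrightarrow> real n / real s \<le> real (cover_num {a..b} f n e)"
    using cover_lower by blast
  have "pol_growth {a..b} f e = ereal 1" if e: "0 < e" "e \<le> \<epsilon>0" for e
  proof -
    obtain N where N: "\<forall>n. cover_num {a..b} f n e \<le> N * n + 1" using cover_num_upper[OF e(1)] by (elim exE) (rule that)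
    define G where "G n = real (cover_num {a..b} f n e)" for n
    have lo: "ln (real n) - ln (real s) \<le> ln (G n)" if n: "n \<ge> max s 2" for n
    proof -
      have "real n / real s \<le> G n" using low e n s unfolding G_def by auto
      moreover have "0 < real n / real s" using n s by auto
      ultimately have "ln (real n / real s) \<le> ln (G n)" by simp
      then show ?thesis using n s by (simp add: ln_div)
    qed
    have hi: "ln (G n) \<le> ln (real (N+1)) + ln (real n)" if n: "n \<ge> max s 2" for n
    proof -
      have "G n \<le> real (N * n + 1)" using N unfolding G_def by (metis of_nat_le_iff)
      also have "\<dots> \<le> real ((N+1) * n)" using n by simp
      finally have "G n \<le> real (N+1) * real n" by (simp add: algebra_simps)
      moreover have "0 < G n"
      proof -
        have "real n / real s \<le> G n" using low e n s unfolding G_def by auto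
        moreover have "0 < real n / real s" using n s by auto
        ultimately show ?thesis by linarith
      qed
      ultimately have "ln (G n) \<le> ln (real (N+1) * real n)" using n by simp
      then show ?thesis using n by (simp add: ln_mult)
    qed
    have lim: "((\<lambda>n. ln (G n) / ln (real n)) \<longlongrightarrow> 1) sequentially"
    proof (rule tendsto_sandwich[of "\<lambda>n. (ln (real n) - ln (real s)) / ln (real n)" _ _ "\<lambda>n. (ln (real (N+1)) + ln (real n)) / ln (real n)"])
      show "\<forall>\<^sub>F n in sequentially. (ln (real n) - ln (real s)) / ln (real n) \<le> ln (G n) / ln (real n)"
        using eventually_ge_at_top[of "max s 2"]
      proof eventually_elim
        case (elim n)
        then have "ln (real n) > 0" by simp
        then show ?case using lo[OF elim] by (simp add: divide_right_mono)
      qed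
      show "\<forall>\<^sub>F n in sequentially. ln (G n) / ln (real n) \<le> (ln (real (N+1)) + ln (real n)) / ln (real n)"
        using eventually_ge_at_top[of "max s 2"]
      proof eventually_elim
        case (elim n)
        then have "ln (real n) > 0" by simp
        then show ?case using hi[OF elim] by (simp add: divide_right_mono)
      qed
      show "((\<lambda>n. (ln (real n) - ln (real s)) / ln (real n)) \<longlongrightarrow> 1) sequentially" by real_asymp
      show "((\<lambda>n. (ln (real (N+1)) + ln (real n)) / ln (real n)) \<longlongrightarrow> 1) sequentially" by real_asymp
    qed
    then have "((\<lambda>n. ereal (ln (G n) / ln (real n))) \<longlongrightarrow> ereal 1) sequentially"
      by (simp add: lim_ereal)
    then have "limsup (\<lambda>n. ereal (ln (G n) / ln (real n))) = ereal 1"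
      by (intro lim_imp_Limsup) simp_all
    then show ?thesis unfolding pol_growth_def G_def .
  qed
  then show ?thesis using \<epsilon>0 by blast
qed

end

lemma refl_iter: fixes c :: real and f :: "real \<Rightarrow> real"
  shows "((\<lambda>x. c - f (c - x)) ^^ k) x = c - (f ^^ k) (c - x)"
  by (induction k arbitrary: x) auto

lemma refl_dist: fixes c :: real and f :: "real \<Rightarrow> real"
  shows "dyn_dist (\<lambda>x. c - f (c - x)) n x y = dyn_dist f n (c - x) (c - y)"
proof -
  have "(\<lambda>k. \<bar>((\<lambda>x. c - f (c - x)) ^^ k) x - ((\<lambda>x. c - f (c - x)) ^^ k) y\<bar>) =
        (\<lambda>k. \<bar>(f ^^ k) (c - x) - (f ^^ k) (c - y)\<bar>)"
    by (rule ext) (simp add: refl_iter abs_minus_commute)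
  then show ?thesis unfolding dyn_dist_def by (simp only:)
qed

lemma refl_covers_sub:
  "{card C | C. finite C \<and> C \<subseteq> {a..b} \<and> {a..b} \<subseteq> (\<Union>c\<in>C. dyn_ball {a..b} (\<lambda>x. (a+b) - f ((a+b) - x)) n c e)}
   \<subseteq> {card C | C. finite C \<and> C \<subseteq> {a..b} \<and> {a..b} \<subseteq> (\<Union>c\<in>C. dyn_ball {a..b} f n c e)}"
proof
  fix k assume "k \<in> {card C | C. finite C \<and> C \<subseteq> {a..b} \<and> {a..b} \<subseteq> (\<Union>c\<in>C. dyn_ball {a..b} (\<lambda>x. (a+b) - f ((a+b) - x)) n c e)}"
  then obtain C where C: "finite C" "C \<subseteq> {a..b}" "{a..b} \<subseteq> (\<Union>c\<in>C. dyn_ball {a..b} (\<lambda>x. (a+b) - f ((a+b) - x)) n c e)"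
    and k: "k = card C" by blast
  define C' where "C' = (\<lambda>x. (a+b) - x) ` C"
  have inj: "inj_on (\<lambda>x. (a+b) - x) C" by (rule inj_onI) simp
  have "card C' = card C" unfolding C'_def by (rule card_image[OF inj])
  moreover have "finite C'" using C(1) by (simp add: C'_def)
  moreover have "C' \<subseteq> {a..b}" using C(2) by (auto simp: C'_def)
  moreover have "{a..b} \<subseteq> (\<Union>c\<in>C'. dyn_ball {a..b} f n c e)"
  proof
    fix y assume y: "y \<in> {a..b}"
    then have "(a+b) - y \<in> {a..b}" by auto
    then obtain x0 where x0: "x0 \<in> C" "(a+b) - y \<in> dyn_ball {a..b} (\<lambda>x. (a+b) - f ((a+b) - x)) n x0 e"
      using C(3) by blast
    then have "dyn_dist f n ((a+b) - x0) y < e" by (simp add: dyn_ball_def refl_dist)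
    then have "y \<in> dyn_ball {a..b} f n ((a+b) - x0) e" using y by (simp add: dyn_ball_def)
    moreover have "(a+b) - x0 \<in> C'" using x0(1) by (simp add: C'_def)
    ultimately show "y \<in> (\<Union>c\<in>C'. dyn_ball {a..b} f n c e)" by blast
  qed
  ultimately show "k \<in> {card C | C. finite C \<and> C \<subseteq> {a..b} \<and> {a..b} \<subseteq> (\<Union>c\<in>C. dyn_ball {a..b} f n c e)}"
    using k by (intro CollectI exI[of _ C']) simp
qed

lemma refl_cover_num: "cover_num {a..b} (\<lambda>x. (a+b) - f ((a+b) - x)) n e = cover_num {a..b} f n e"
proof -
  have ff: "(\<lambda>x. (a+b) - (\<lambda>x. (a+b) - f ((a+b) - x)) ((a+b) - x)) = f" by (rule ext) simp
  have "{card C | C. finite C \<and> C \<subseteq> {a..b} \<and> {a..b} \<subseteq> (\<Union>c\<in>C. dyn_ball {a..b} (\<lambda>x. (a+b) - f ((a+b) - x)) n c e)}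
   = {card C | C. finite C \<and> C \<subseteq> {a..b} \<and> {a..b} \<subseteq> (\<Union>c\<in>C. dyn_ball {a..b} f n c e)}"
    using refl_covers_sub[of a b f n e] refl_covers_sub[of a b "\<lambda>x. (a+b) - f ((a+b) - x)" n e]
    unfolding ff by (rule equalityI)
  then show ?thesis unfolding cover_num_def by simp
qed

theorem lemma3p2:
  fixes a b :: real and f :: "real \<Rightarrow> real"
  assumes "a < b"
    and "f ` {a..b} \<subseteq> {a..b}"
    and "continuous_on {a..b} f"
    and "mono_on {a..b} f"
    and "f a = a" and "f b = b"
    and "\<And>x. x \<in> {a<..<b} \<Longrightarrow> f x \<noteq> x"
  shows "(pol_growth {a..b} f \<longlongrightarrow> ereal 1) (at_right 0) \<and> hpol {a..b} f = 1"
proof -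
  note A = assms
  have sign: "(\<forall>x\<in>{a<..<b}. x < f x) \<or> (\<forall>x\<in>{a<..<b}. f x < x)"
  proof (rule ccontr)
    assume "\<not> ?thesis"
    then obtain u v where u: "u \<in> {a<..<b}" "f u < u" and v: "v \<in> {a<..<b}" "v < f v"
      using A(7) by (metis linorder_neqE_linordered_idom)
    have hc: "continuous_on {min u v..max u v} (\<lambda>x. f x - x)"
      by (intro continuous_intros continuous_on_subset[OF A(3)]) (use u v in auto)
    have "\<exists>z\<in>{min u v..max u v}. f z - z = 0"
    proof (cases "u \<le> v")
      case True
      then have "\<exists>z\<ge>u. z \<le> v \<and> f z - z = 0"
        using u v hc by (intro IVT') (auto simp: min_def max_def)
      then show ?thesis using True by (auto simp: min_def max_def)
    next
      case False
      then have "\<exists>z\<ge>v. z \<le> u \<and> f z - z = 0"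
        using u v hc by (intro IVT2') (auto simp: min_def max_def)
      then show ?thesis using False by (auto simp: min_def max_def)
    qed
    then obtain z where "z \<in> {min u v..max u v}" "f z = z" by auto
    moreover then have "z \<in> {a<..<b}" using u v by auto
    ultimately show False using A(7) by blast
  qed
  have res: "\<exists>\<epsilon>0>0. \<forall>e. 0 < e \<and> e \<le> \<epsilon>0 \<longrightarrow> pol_growth {a..b} f e = ereal 1"
    using sign
  proof
    assume up: "\<forall>x\<in>{a<..<b}. x < f x"
    have "up_map a b f" unfolding up_map_def using A up by blast
    then show ?thesis by (rule up_map.up_result)
  next
    assume down: "\<forall>x\<in>{a<..<b}. f x < x"
    define g where "g = (\<lambda>x. (a+b) - f ((a+b) - x))"
    have r: "(a+b) - x \<in> {a..b}" if "x \<in> {a..b}" for x using that by auto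
    have "up_map a b g"
    proof (unfold up_map_def, intro conjI allI impI)
      show "a < b" by (rule A(1))
      show "g ` {a..b} \<subseteq> {a..b}"
      proof
        fix y assume "y \<in> g ` {a..b}"
        then obtain x where x: "x \<in> {a..b}" "y = g x" by blast
        then have "f ((a+b) - x) \<in> {a..b}" using A(2) r by blast
        then show "y \<in> {a..b}" using x by (auto simp: g_def)
      qed
      show "continuous_on {a..b} g"
        unfolding g_def
        by (intro continuous_intros continuous_on_compose2[OF A(3)]) (use r in auto)
      show "mono_on {a..b} g"
      proof (rule mono_onI)
        fix x y assume "x \<in> {a..b}" "y \<in> {a..b}" "x \<le> y"
        then have "f ((a+b) - y) \<le> f ((a+b) - x)" using mono_onD[OF A(4)] r by auto
        then show "g x \<le> g y" by (simp add: g_def)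
      qed
      show "g a = a" using A(6) by (simp add: g_def)
      show "g b = b" using A(5) by (simp add: g_def)
      fix x :: real assume "x \<in> {a<..<b}"
      then have "(a+b) - x \<in> {a<..<b}" by auto
      then have "f ((a+b) - x) < (a+b) - x" using down by blast
      then show "x < g x" by (simp add: g_def)
    qed
    then have "\<exists>\<epsilon>0>0. \<forall>e. 0 < e \<and> e \<le> \<epsilon>0 \<longrightarrow> pol_growth {a..b} g e = ereal 1" by (rule up_map.up_result)
    moreover have "pol_growth {a..b} g = pol_growth {a..b} f"
      unfolding g_def pol_growth_def refl_cover_num ..
    ultimately show ?thesis by simp
  qed
  then obtain \<epsilon>0 where \<epsilon>0: "\<epsilon>0 > 0" "\<forall>e. 0 < e \<and> e \<le> \<epsilon>0 \<longrightarrow> pol_growth {a..b} f e = ereal 1" by blast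
  have ev: "eventually (\<lambda>e. pol_growth {a..b} f e = ereal 1) (at_right 0)"
    unfolding eventually_at_right_field using \<epsilon>0 by (intro exI[of _ \<epsilon>0]) auto
  have lim: "(pol_growth {a..b} f \<longlongrightarrow> ereal 1) (at_right 0)"
    by (rule tendsto_eventually[OF ev])
  have "hpol {a..b} f = ereal 1"
    unfolding hpol_def by (rule tendsto_Lim[OF trivial_limit_at_right_real lim])
  then show ?thesis using lim by (simp add: one_ereal_def)
qed

end
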